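(* Let $T$ be a $J$-unitary operator on ${\cal K}$. Then $$\Re e\,V(T)=({\bf 1}+T)\bigl({\bf 1}+T^*T\bigr)^{-1}({\bf 1}+T)^*-{\bf 1},$$ where $\Re e\,V(T)=\tfrac12(V(T)+V(T)^* )$.
   Context: ${\cal H}$ is a separable complex Hilbert space, ${\cal K}={\cal H}\oplus{\cal H}$, $J=\begin{pmatrix}{\bf 1}&0\\0&-{\bf 1}\end{pmatrix}$. A bounded invertible $T$ on ${\cal K}$ is $J$-unitary if $T^*JT=J$; writing $T=\begin{pmatrix}a&b\\c&d\end{pmatrix}$ the blocks $a,d$ are invertible. $V(T)$ denotes the unitary $\begin{pmatrix}(a^* )^{-1}&bd^{-1}\\-d^{-1}c&d^{-1}\end{pmatrix}$. *)

theory Defs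
  imports "HOL-Analysis.Analysis"
begin

text \<open>A complex inner product space is encoded as a real inner product space together
with a complex scalar multiplication extending the real one, for which multiplication by
the imaginary unit is isometric. The complex inner product (linear in the first argument)
is then recovered as below; its real part is the real inner product.\<close>

class complex_inner = real_inner +
  fixes scaleC :: "complex \<Rightarrow> 'a \<Rightarrow> 'a"
  assumes scaleC_add_right: "scaleC a (x + y) = scaleC a x + scaleC a y"
    and scaleC_add_left: "scaleC (a + b) x = scaleC a x + scaleC b x"
    and scaleC_scaleC: "scaleC a (scaleC b x) = scaleC (a * b) x"
    and scaleC_one: "scaleC 1 x = x"
    and scaleR_scaleC: "scaleR r x = scaleC (complex_of_real r) x"
    and inner_scaleC_ii: "inner (scaleC \<i> x) (scaleC \<i> y) = inner x y"

class chilbert_space = complex_inner + complete_space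

definition cinner :: "'a::complex_inner \<Rightarrow> 'a \<Rightarrow> complex" where
  "cinner x y = Complex (inner x y) (inner x (scaleC \<i> y))"

definition bounded_clinear_op :: "('a::complex_inner \<Rightarrow> 'a) \<Rightarrow> bool" where
  "bounded_clinear_op f \<longleftrightarrow> bounded_linear f \<and> (\<forall>c x. f (scaleC c x) = scaleC c (f x))"

definition adjH :: "('a::complex_inner \<Rightarrow> 'a) \<Rightarrow> ('a \<Rightarrow> 'a)" where
  "adjH A = (THE B. \<forall>x y. cinner (B x) y = cinner x (A y))"

definition scaleK :: "complex \<Rightarrow> 'a::complex_inner \<times> 'a \<Rightarrow> 'a \<times> 'a" where
  "scaleK c p = (scaleC c (fst p), scaleC c (snd p))"

definition cinnerK :: "'a::complex_inner \<times> 'a \<Rightarrow> 'a \<times> 'a \<Rightarrow> complex" where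
  "cinnerK p q = cinner (fst p) (fst q) + cinner (snd p) (snd q)"

definition bounded_clinear_opK :: "('a::complex_inner \<times> 'a \<Rightarrow> 'a \<times> 'a) \<Rightarrow> bool" where
  "bounded_clinear_opK T \<longleftrightarrow> bounded_linear T \<and> (\<forall>c p. T (scaleK c p) = scaleK c (T p))"

definition adjK :: "('a::complex_inner \<times> 'a \<Rightarrow> 'a \<times> 'a) \<Rightarrow> ('a \<times> 'a \<Rightarrow> 'a \<times> 'a)" where
  "adjK T = (THE S. \<forall>p q. cinnerK (S p) q = cinnerK p (T q))"

definition Jop :: "'a::complex_inner \<times> 'a \<Rightarrow> 'a \<times> 'a" where
  "Jop p = (fst p, - snd p)"

definition J_unitary :: "('a::complex_inner \<times> 'a \<Rightarrow> 'a \<times> 'a) \<Rightarrow> bool" where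
  "J_unitary T \<longleftrightarrow> bounded_clinear_opK T \<and> bij T \<and> adjK T \<circ> Jop \<circ> T = Jop"

text \<open>Block entries of an operator on \<open>K\<close>: \<open>T = [[a, b], [c, d]]\<close>.\<close>

definition blk_a :: "('a::complex_inner \<times> 'a \<Rightarrow> 'a \<times> 'a) \<Rightarrow> 'a \<Rightarrow> 'a" where
  "blk_a T x = fst (T (x, 0))"
definition blk_b :: "('a::complex_inner \<times> 'a \<Rightarrow> 'a \<times> 'a) \<Rightarrow> 'a \<Rightarrow> 'a" where
  "blk_b T y = fst (T (0, y))"
definition blk_c :: "('a::complex_inner \<times> 'a \<Rightarrow> 'a \<times> 'a) \<Rightarrow> 'a \<Rightarrow> 'a" where
  "blk_c T x = snd (T (x, 0))"
definition blk_d :: "('a::complex_inner \<times> 'a \<Rightarrow> 'a \<times> 'a) \<Rightarrow> 'a \<Rightarrow> 'a" where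
  "blk_d T y = snd (T (0, y))"

definition Vop :: "('a::complex_inner \<times> 'a \<Rightarrow> 'a \<times> 'a) \<Rightarrow> 'a \<times> 'a \<Rightarrow> 'a \<times> 'a" where
  "Vop T p =
     (let a = blk_a T; b = blk_b T; c = blk_c T; d = blk_d T
      in (inv (adjH a) (fst p) + b (inv d (snd p)),
          - inv d (c (fst p)) + inv d (snd p)))"

definition ReK :: "('a::complex_inner \<times> 'a \<Rightarrow> 'a \<times> 'a) \<Rightarrow> 'a \<times> 'a \<Rightarrow> 'a \<times> 'a" where
  "ReK A p = scaleR (1/2) (A p + adjK A p)"

end

theory Submission
  imports Defs
begin


lemma solve_coercive:
  fixes S :: "'a::{real_inner,complete_space} \<Rightarrow> 'a" and f :: "'a \<Rightarrow> real"
  assumes S: "bounded_linear S" and sym: "\<And>x y. inner (S x) y = inner x (S y)"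
    and coer: "\<And>x. inner x x \<le> inner (S x) x" and f: "bounded_linear f"
  shows "\<exists>z. \<forall>h. inner (S z) h = f h"
proof -
  interpret S: bounded_linear S by fact
  interpret f: bounded_linear f by fact
  define q where "q x = inner (S x) x" for x
  define \<psi> where "\<psi> x = q x / 2 - f x" for x
  obtain K where K: "\<And>x. norm (f x) \<le> norm x * K" "K > 0" using f.pos_bounded by blast
  have qn: "norm x ^ 2 \<le> q x" for x using coer[of x] by (simp add: q_def dot_square_norm)
  have lb: "- (K^2) / 2 \<le> \<psi> x" for x
  proof -
    have "f x \<le> norm x * K" using K(1)[of x] by simp
    moreover have "0 \<le> (norm x - K)^2" by simp
    ultimately show ?thesis using qn[of x] unfolding \<psi>_def power2_eq_square
      by (simp add: algebra_simps)
  qed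
  define m where "m = Inf (range \<psi>)"
  have bdd: "bdd_below (range \<psi>)" using lb by (intro bdd_belowI[of _ "- (K^2) / 2"]) auto
  have mle: "m \<le> \<psi> x" for x unfolding m_def by (rule cInf_lower[OF _ bdd]) simp
  have "\<exists>x. \<psi> x < m + inverse (real (Suc n))" for n
  proof -
    have "Inf (range \<psi>) < m + inverse (real (Suc n))" unfolding m_def by simp
    from cInf_lessD[OF _ this] show ?thesis by auto
  qed
  then obtain X where X: "\<And>n. \<psi> (X n) < m + inverse (real (Suc n))" by metis
  have qadd: "q (x + y) = q x + 2 * inner (S x) y + q y" for x y
    unfolding q_def by (simp add: S.add inner_add_left inner_add_right sym[of y x] inner_commute[of x "S y"] inner_commute[of y "S x"])
  have qscale: "q (scaleR t x) = t^2 * q x" for t x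
    unfolding q_def by (simp add: S.scale power2_eq_square)
  have qdiff: "q (x - y) = q x - 2 * inner (S x) y + q y" for x y
    using qadd[of x "-y"] qscale[of "-1" y] by (simp add: S.neg)
  have para: "norm (x - y) ^ 2 / 4 \<le> \<psi> x + \<psi> y - 2 * \<psi> (scaleR (1/2) (x + y))" for x y
  proof -
    have "\<psi> (scaleR (1/2) (x + y)) = q (x+y) / 8 - (f x + f y)/2"
      unfolding \<psi>_def qscale by (simp add: f.add f.scale power2_eq_square)
    then have "\<psi> x + \<psi> y - 2 * \<psi> (scaleR (1/2) (x + y)) = q (x - y) / 4"
      unfolding \<psi>_def qadd qdiff by (simp add: field_simps)
    then show ?thesis using qn[of "x-y"] by simp
  qed
  have dist: "norm (X a - X b) ^ 2 \<le> 4 * (inverse (real (Suc a)) + inverse (real (Suc b)))" for a b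
    using para[of "X a" "X b"] X[of a] X[of b] mle[of "scaleR (1/2) (X a + X b)"] by simp
  have "Cauchy X"
  proof (rule CauchyI)
    fix e :: real assume e: "0 < e"
    obtain N :: nat where N: "8 / e^2 < real N" using reals_Archimedean2 by blast
    have Npos: "0 < real N" using N e by (smt (verit) divide_pos_pos zero_less_power)
    show "\<exists>M. \<forall>m\<ge>M. \<forall>n\<ge>M. norm (X m - X n) < e"
    proof (intro exI allI impI)
      fix a b assume a: "N \<le> a" and b: "N \<le> b"
      have ia: "inverse (real (Suc a)) \<le> inverse (real N)" using a Npos
        by (intro le_imp_inverse_le) auto
      have ib: "inverse (real (Suc b)) \<le> inverse (real N)" using b Npos
        by (intro le_imp_inverse_le) auto
      have "8 / real N < e^2" using N Npos e by (simp add: field_simps)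
      moreover have "4 * (inverse (real (Suc a)) + inverse (real (Suc b))) \<le> 8 / real N"
        using ia ib by (simp add: divide_inverse)
      ultimately have "norm (X a - X b) ^ 2 < e^2" using dist[of a b] by linarith
      then show "norm (X a - X b) < e" using e by (smt (verit) power_mono norm_ge_zero)
    qed
  qed
  then obtain z where z: "X \<longlonglongrightarrow> z" using Cauchy_convergent_iff convergent_def by blast
  have l1: "(\<lambda>n. \<psi> (X n)) \<longlonglongrightarrow> m"
  proof (rule tendsto_sandwich[of "\<lambda>n. m" _ _ "\<lambda>n. m + inverse (real (Suc n))"])
    show "\<forall>\<^sub>F n in sequentially. m \<le> \<psi> (X n)" using mle by simp
    show "\<forall>\<^sub>F n in sequentially. \<psi> (X n) \<le> m + inverse (real (Suc n))" using X by (simp add: less_imp_le)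
  qed (rule tendsto_const, rule LIMSEQ_inverse_real_of_nat_add)
  have l2: "(\<lambda>n. \<psi> (X n)) \<longlonglongrightarrow> \<psi> z"
    unfolding \<psi>_def q_def
    by (intro tendsto_intros S.tendsto f.tendsto z) simp
  have pz: "\<psi> z = m" using LIMSEQ_unique[OF l2 l1] .
  show ?thesis
  proof (intro exI allI)
    fix h
    define g where "g = inner (S z) h - f h"
    define A where "A = q h"
    have A0: "0 \<le> A" using qn[of h] unfolding A_def by (smt (verit) zero_le_power2)
    have exp: "\<psi> (z + scaleR t h) = \<psi> z + t * g + t^2 * A / 2" for t
      unfolding \<psi>_def qadd qscale g_def A_def by (simp add: f.add f.scale field_simps power2_eq_square)
    define t where "t = - g / (A + 1)"
    have 0: "0 \<le> t * g + t^2 * A / 2" using exp[of t] mle[of "z + scaleR t h"] pz by simp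
    have st: "(A + 1) * t = - g" unfolding t_def using A0 by simp
    have "(A+1)^2 * (t * g + t^2 * A / 2) = ((A+1)*t) * g * (A+1) + ((A+1)*t)^2 * A / 2"
      by (simp add: algebra_simps power2_eq_square)
    also have "\<dots> = - (g^2 * (A + 2)) / 2" unfolding st by (simp add: algebra_simps power2_eq_square)
    finally have "0 \<le> - (g^2 * (A + 2)) / 2" using 0 by (metis mult_nonneg_nonneg zero_le_power2)
    then have "g^2 * (A + 2) \<le> 0" by simp
    then have "g = 0" using A0 by (smt (verit) mult_pos_pos zero_less_power2)
    then show "inner (S z) h = f h" unfolding g_def by simp
  qed
qed



definition radj :: "('a::real_inner \<Rightarrow> 'a) \<Rightarrow> 'a \<Rightarrow> 'a" where
  "radj A = (SOME B. \<forall>x y. inner (B x) y = inner x (A y))"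

lemma inner_ext: "(\<And>y. inner u y = inner v y) \<Longrightarrow> u = v"
proof -
  assume "\<And>y. inner u y = inner v y"
  then have "inner (u - v) (u - v) = 0" by (simp add: inner_diff_left)
  then show ?thesis by simp
qed

lemma radj_ex:
  fixes A :: "'a::{real_inner,complete_space} \<Rightarrow> 'a"
  assumes A: "bounded_linear A"
  shows "\<exists>B. \<forall>x y. inner (B x) y = inner x (A y)"
proof -
  have "\<exists>z. \<forall>y. inner (id z) y = inner x (A y)" for x
    by (rule solve_coercive) (auto intro: bounded_linear_ident bounded_linear_compose[OF bounded_linear_inner_right A])
  then show ?thesis by (metis id_apply)
qed

lemma radj:
  fixes A :: "'a::{real_inner,complete_space} \<Rightarrow> 'a"
  assumes "bounded_linear A"
  shows "inner (radj A x) y = inner x (A y)"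
  using someI_ex[OF radj_ex[OF assms]] unfolding radj_def by blast

lemma radj_unique:
  fixes A :: "'a::{real_inner,complete_space} \<Rightarrow> 'a"
  assumes "bounded_linear A" "\<And>y. inner u y = inner x (A y)"
  shows "radj A x = u"
  by (rule inner_ext) (simp add: radj assms)

lemma radj_bl:
  fixes A :: "'a::{real_inner,complete_space} \<Rightarrow> 'a"
  assumes A: "bounded_linear A"
  shows "bounded_linear (radj A)"
proof -
  interpret A: bounded_linear A by fact
  obtain K where K: "\<And>x. norm (A x) \<le> norm x * K" "K > 0" using A.pos_bounded by blast
  show ?thesis
  proof (rule bounded_linear_intro)
    show "radj A (x + y) = radj A x + radj A y" for x y
      by (rule radj_unique[OF A]) (simp add: inner_add_left inner_add_right radj[OF A])
    show "radj A (scaleR r x) = scaleR r (radj A x)" for r x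
      by (rule radj_unique[OF A]) (simp add: radj[OF A])
    show "norm (radj A x) \<le> norm x * K" for x
    proof -
      have "norm (radj A x) ^ 2 = inner x (A (radj A x))" by (simp add: radj[OF A] power2_norm_eq_inner)
      also have "\<dots> \<le> norm x * norm (A (radj A x))" by (rule norm_cauchy_schwarz)
      also have "\<dots> \<le> norm x * (norm (radj A x) * K)" using K(1) by (simp add: mult_left_mono)
      finally have "norm (radj A x) * norm (radj A x) \<le> (norm x * K) * norm (radj A x)"
        by (simp add: power2_eq_square algebra_simps)
      then show ?thesis
        using K(2) by (cases "norm (radj A x) = 0") (auto simp: mult_le_cancel_right)
    qed
  qed
qed

lemma radj_radj:
  fixes A :: "'a::{real_inner,complete_space} \<Rightarrow> 'a"
  assumes A: "bounded_linear A"
  shows "radj (radj A) x = A x"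
  by (rule radj_unique[OF radj_bl[OF A]]) (metis radj[OF A] inner_commute)

lemma surj_radj:
  fixes A :: "'a::{real_inner,complete_space} \<Rightarrow> 'a"
  assumes A: "bounded_linear A" and nb: "\<And>x. norm x \<le> norm (A x)"
  shows "surj (radj A)"
proof -
  have ex: "\<exists>z. \<forall>h. inner ((radj A \<circ> A) z) h = inner y h" for y
  proof (rule solve_coercive)
    show "bounded_linear (radj A \<circ> A)"
      using bounded_linear_compose[OF radj_bl[OF A] A] by (simp add: comp_def)
    show "inner ((radj A \<circ> A) x) y = inner x ((radj A \<circ> A) y)" for x y
      by (metis comp_apply radj[OF A] inner_commute)
    show "inner x x \<le> inner ((radj A \<circ> A) x) x" for x
    proof -
      have "inner x x = norm x ^ 2" by (simp add: power2_norm_eq_inner)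
      also have "\<dots> \<le> norm (A x) ^ 2" using nb[of x] by (simp add: power_mono)
      also have "\<dots> = inner ((radj A \<circ> A) x) x" by (simp add: radj[OF A] power2_norm_eq_inner)
      finally show ?thesis .
    qed
    show "bounded_linear (inner y)" by (rule bounded_linear_inner_right)
  qed
  then have "\<exists>z. radj A (A z) = y" for y
  proof -
    obtain z where "\<forall>h. (radj A \<circ> A) z \<bullet> h = y \<bullet> h" using ex[of y] by blast
    then have "radj A (A z) = y" using inner_ext[of "radj A (A z)" y] by simp
    then show ?thesis by blast
  qed
  then have "\<forall>y. \<exists>x. y = radj A x" by metis
  then show ?thesis unfolding surj_def .
qed

lemma scaleC_zero: "scaleC c (0::'a::complex_inner) = 0"
  using scaleC_add_right[of c "0::'a" 0] by simp

lemma inner_ii: "inner (scaleC \<i> x) y = - inner x (scaleC \<i> (y::'a::complex_inner))"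
proof -
  have "inner (scaleC \<i> x) y = inner (scaleC \<i> (scaleC \<i> x)) (scaleC \<i> y)" by (rule inner_scaleC_ii[symmetric])
  also have "scaleC \<i> (scaleC \<i> x) = - x"
    using scaleR_scaleC[of "-1" x] by (simp add: scaleC_scaleC)
  finally show ?thesis by simp
qed

lemma cinnerK_eq: "cinnerK p q = Complex (inner p q) (inner p (scaleK \<i> q))"
  by (simp add: cinnerK_def cinner_def scaleK_def inner_prod_def complex_eq_iff)

lemma adjK_radj:
  fixes S :: "'h::chilbert_space \<times> 'h \<Rightarrow> 'h \<times> 'h"
  assumes S: "bounded_linear S" and C: "\<And>c p. S (scaleK c p) = scaleK c (S p)"
  shows "adjK S = radj S"
  unfolding adjK_def
proof (rule the_equality)
  show "\<forall>p q. cinnerK (radj S p) q = cinnerK p (S q)"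
    by (simp add: cinnerK_eq radj[OF S] C)
  fix S' assume "\<forall>p q. cinnerK (S' p) q = cinnerK p (S q)"
  then have "\<And>p q. inner (S' p) q = inner p (S q)" by (metis cinnerK_eq complex.sel(1))
  then show "S' = radj S" by (intro ext radj_unique[symmetric, OF S]) auto
qed

lemma cinner_eq: "cinner p q = Complex (inner p q) (inner p (scaleC \<i> q))"
  by (simp add: cinner_def)

lemma adjH_radj:
  fixes S :: "'h::chilbert_space \<Rightarrow> 'h"
  assumes S: "bounded_linear S" and C: "\<And>c p. S (scaleC c p) = scaleC c (S p)"
  shows "adjH S = radj S"
  unfolding adjH_def
proof (rule the_equality)
  show "\<forall>p q. cinner (radj S p) q = cinner p (S q)"
    by (simp add: cinner_eq radj[OF S] C)
  fix S' assume "\<forall>p q. cinner (S' p) q = cinner p (S q)"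
  then have "\<And>p q. inner (S' p) q = inner p (S q)" by (metis cinner_eq complex.sel(1))
  then show "S' = radj S" by (intro ext radj_unique[symmetric, OF S]) auto
qed



lemma normsq: "norm (u::'a::real_normed_vector \<times> 'b::real_normed_vector) ^ 2 = norm (fst u) ^ 2 + norm (snd u) ^ 2"
  by (cases u) (simp add: norm_Pair)

lemma JI: "inner (Jop u) u = norm (fst u) ^ 2 - norm (snd u) ^ 2"
  by (cases u) (simp add: Jop_def inner_prod_def power2_norm_eq_inner)

lemma inj_from_bound:
  fixes f :: "'a::real_normed_vector \<Rightarrow> 'b::real_normed_vector"
  assumes "linear f" "\<And>x. norm x \<le> norm (f x)"
  shows "inj f"
proof (rule injI)
  fix x y assume "f x = f y"
  then have "f (x - y) = 0" using linear_diff[OF assms(1)] by simp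
  then have "norm (x - y) \<le> 0" using assms(2)[of "x - y"] by simp
  then show "x = y" by simp
qed

lemma sq_le: "(a::real) ^ 2 = b ^ 2 + c ^ 2 \<Longrightarrow> 0 \<le> a \<Longrightarrow> b \<le> a"
  by (smt (verit) power2_le_imp_le zero_le_power2)

theorem proposition3p21:
  fixes T :: "'h::chilbert_space \<times> 'h \<Rightarrow> 'h \<times> 'h"
  assumes separable: "\<exists>D::'h set. countable D \<and> closure D = UNIV"
    and JU: "J_unitary T"
  shows "ReK (Vop T) =
    (\<lambda>p. ((\<lambda>q. q + T q) \<circ> inv (\<lambda>q. q + adjK T (T q)) \<circ> adjK (\<lambda>q. q + T q)) p - p)"
proof -
  have Tbl: "bounded_linear T" and TC: "\<And>c p. T (scaleK c p) = scaleK c (T p)" and bijT: "bij T"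
    and H0: "adjK T \<circ> Jop \<circ> T = Jop"
    using JU unfolding J_unitary_def bounded_clinear_opK_def by auto
  interpret T: bounded_linear T by fact
  define Ts where "Ts = radj T"
  have adjT: "adjK T = Ts" unfolding Ts_def by (rule adjK_radj[OF Tbl TC])
  have Tsbl: "bounded_linear Ts" unfolding Ts_def by (rule radj_bl[OF Tbl])
  interpret Ts: bounded_linear Ts by fact
  have Tsi: "inner (Ts p) q = inner p (T q)" for p q unfolding Ts_def by (rule radj[OF Tbl])
  have Tsi': "inner q (Ts p) = inner (T q) p" for p q using Tsi[of p q] by (simp add: inner_commute)
  have H: "Ts (Jop (T p)) = Jop p" for p using H0 adjT by (metis comp_apply)
  have JJ: "Jop (Jop p) = p" for p :: "'h \<times> 'h" by (simp add: Jop_def)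
  have Tiso: "norm (fst (T x)) ^ 2 - norm (snd (T x)) ^ 2 = norm (fst x) ^ 2 - norm (snd x) ^ 2" for x
  proof -
    have "inner (Jop (T x)) (T x) = inner (Jop x) x" using Tsi[of "Jop (T x)" x] H by simp
    then show ?thesis by (simp add: JI)
  qed
  have TJTs: "T (Jop (Ts r)) = Jop r" for r
  proof -
    obtain p where p: "Jop r = T p" using bijT by (metis bij_pointE)
    have "T (Jop (Ts (Jop (T p)))) = T p" by (simp add: H JJ)
    then show ?thesis using p JJ by metis
  qed
  have Tsiso: "norm (fst (Ts r)) ^ 2 - norm (snd (Ts r)) ^ 2 = norm (fst r) ^ 2 - norm (snd r) ^ 2" for r
  proof -
    have "inner (Jop (Ts r)) (Ts r) = inner (Jop r) r" using Tsi'[where p=r and q="Jop (Ts r)"] TJTs by simp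
    then show ?thesis by (simp add: JI)
  qed
  define a where "a x = fst (T (x, 0))" for x
  define b where "b x = fst (T (0, x))" for x
  define c where "c x = snd (T (x, 0))" for x
  define d where "d x = snd (T (0, x))" for x
  have blin: "bounded_linear (\<lambda>x::'h. (x, 0::'h))" "bounded_linear (\<lambda>x::'h. (0::'h, x))"
    by (auto intro!: bounded_linear_Pair bounded_linear_ident bounded_linear_zero)
  have abl: "bounded_linear a" unfolding a_def[abs_def]
    using bounded_linear_compose[OF bounded_linear_fst bounded_linear_compose[OF Tbl blin(1)]] by simp
  have bbl: "bounded_linear b" unfolding b_def[abs_def]
    using bounded_linear_compose[OF bounded_linear_fst bounded_linear_compose[OF Tbl blin(2)]] by simp
  have cbl: "bounded_linear c" unfolding c_def[abs_def]
    using bounded_linear_compose[OF bounded_linear_snd bounded_linear_compose[OF Tbl blin(1)]] by simp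
  have dbl: "bounded_linear d" unfolding d_def[abs_def]
    using bounded_linear_compose[OF bounded_linear_snd bounded_linear_compose[OF Tbl blin(2)]] by simp
  interpret a: bounded_linear a by fact
  interpret b: bounded_linear b by fact
  interpret c: bounded_linear c by fact
  interpret d: bounded_linear d by fact
  have Tx: "T (x1, x2) = (a x1 + b x2, c x1 + d x2)" for x1 x2
  proof -
    have "T (x1, x2) = T (x1, 0) + T (0, x2)" using T.add[of "(x1,0)" "(0,x2)"] by simp
    then show ?thesis by (simp add: a_def b_def c_def d_def prod_eq_iff)
  qed
  define as where "as = radj a"
  define bs where "bs = radj b"
  define cs where "cs = radj c"
  define ds where "ds = radj d"
  have asbl: "bounded_linear as" unfolding as_def by (rule radj_bl[OF abl])
  have bsbl: "bounded_linear bs" unfolding bs_def by (rule radj_bl[OF bbl])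
  have csbl: "bounded_linear cs" unfolding cs_def by (rule radj_bl[OF cbl])
  have dsbl: "bounded_linear ds" unfolding ds_def by (rule radj_bl[OF dbl])
  interpret as: bounded_linear as by fact
  interpret bs: bounded_linear bs by fact
  interpret cs: bounded_linear cs by fact
  interpret ds: bounded_linear ds by fact
  have Tsx: "Ts (u, v) = (as u + cs v, bs u + ds v)" for u v
  proof -
    have 1: "fst (Ts (u, v)) = as u + cs v"
    proof (rule inner_ext)
      fix w
      have "inner (fst (Ts (u, v))) w = inner (Ts (u, v)) (w, 0)" by (simp add: inner_prod_def)
      also have "\<dots> = inner (u, v) (T (w, 0))" by (rule Tsi)
      also have "\<dots> = inner (as u + cs v) w"
        by (simp add: Tx inner_prod_def inner_add_left as_def cs_def radj[OF abl] radj[OF cbl])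
      finally show "inner (fst (Ts (u, v))) w = inner (as u + cs v) w" .
    qed
    have 2: "snd (Ts (u, v)) = bs u + ds v"
    proof (rule inner_ext)
      fix w
      have "inner (snd (Ts (u, v))) w = inner (Ts (u, v)) (0, w)" by (simp add: inner_prod_def)
      also have "\<dots> = inner (u, v) (T (0, w))" by (rule Tsi)
      also have "\<dots> = inner (bs u + ds v) w"
        by (simp add: Tx inner_prod_def inner_add_left bs_def ds_def radj[OF bbl] radj[OF dbl])
      finally show "inner (snd (Ts (u, v))) w = inner (bs u + ds v) w" .
    qed
    show ?thesis using 1 2 by (simp add: prod_eq_iff)
  qed
  have nd: "norm y \<le> norm (d y)" for y
  proof -
    have "norm (d y)^2 = norm y^2 + norm (b y)^2" using Tiso[of "(0, y)"] by (simp add: Tx a.zero c.zero)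
    then show ?thesis by (rule sq_le) simp
  qed
  have na: "norm x \<le> norm (a x)" for x
  proof -
    have "norm (a x)^2 = norm x^2 + norm (c x)^2" using Tiso[of "(x, 0)"] by (simp add: Tx b.zero d.zero)
    then show ?thesis by (rule sq_le) simp
  qed
  have nas: "norm x \<le> norm (as x)" for x
  proof -
    have "norm (as x)^2 = norm x^2 + norm (bs x)^2" using Tsiso[of "(x, 0)"] by (simp add: Tsx cs.zero ds.zero)
    then show ?thesis by (rule sq_le) simp
  qed
  have nds: "norm y \<le> norm (ds y)" for y
  proof -
    have "norm (ds y)^2 = norm y^2 + norm (cs y)^2" using Tsiso[of "(0, y)"] by (simp add: Tsx as.zero bs.zero)
    then show ?thesis by (rule sq_le) simp
  qed
  have injd: "inj d" by (rule inj_from_bound[OF d.linear nd])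
  have injas: "inj as" by (rule inj_from_bound[OF as.linear nas])
  have surjd: "surj d"
  proof -
    have "surj (radj ds)" by (rule surj_radj[OF dsbl nds])
    moreover have "radj ds = d" unfolding ds_def by (rule ext, rule radj_radj[OF dbl])
    ultimately show ?thesis by simp
  qed
  have surja: "surj a"
  proof -
    have "surj (radj as)" by (rule surj_radj[OF asbl nas])
    moreover have "radj as = a" unfolding as_def by (rule ext, rule radj_radj[OF abl])
    ultimately show ?thesis by simp
  qed
  have surjas: "surj as" unfolding as_def by (rule surj_radj[OF abl na])
  have aa: "as (a x) = x + cs (c x)" for x
  proof -
    have "Ts (Jop (T (x, 0))) = Jop (x, 0)" by (rule H)
    then have "as (a x) + cs (- c x) = x" by (simp add: Tx Tsx Jop_def)
    then show ?thesis by (simp add: cs.neg algebra_simps)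
  qed
  have ab: "as (b y) = cs (d y)" for y
  proof -
    have "Ts (Jop (T (0, y))) = Jop (0, y)" by (rule H)
    then have "as (b y) + cs (- d y) = 0" by (simp add: Tx Tsx Jop_def)
    then show ?thesis by (simp add: cs.neg algebra_simps)
  qed
  have aC: "a (scaleC k x) = scaleC k (a x)" for k x
  proof -
    have "(scaleC k x, 0::'h) = scaleK k (x, 0)" by (simp add: scaleK_def scaleC_zero)
    then have "T (scaleC k x, 0) = scaleK k (T (x, 0))" by (simp add: TC)
    then show ?thesis unfolding a_def by (simp add: scaleK_def)
  qed
  have adjHa: "adjH a = as" unfolding as_def by (rule adjH_radj[OF abl aC])
  define V where "V = Vop T"
  have Vf: "V p = (inv as (fst p) + b (inv d (snd p)), - inv d (c (fst p)) + inv d (snd p))" for p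
  proof -
    have "blk_a T = a" "blk_b T = b" "blk_c T = c" "blk_d T = d"
      by (auto simp: blk_a_def blk_b_def blk_c_def blk_d_def a_def b_def c_def d_def)
    then show ?thesis unfolding V_def Vop_def Let_def by (simp add: adjHa)
  qed
  define M where "M x = (fst x, snd (T x))" for x
  have Mbl: "bounded_linear M" unfolding M_def[abs_def]
    by (intro bounded_linear_Pair bounded_linear_fst bounded_linear_compose[OF bounded_linear_snd Tbl])
  interpret M: bounded_linear M by fact
  define Minv where "Minv w = (fst w, inv d (snd w - c (fst w)))" for w
  have MMinv: "M (Minv w) = w" for w
    by (cases w) (simp add: M_def Minv_def Tx surj_f_inv_f[OF surjd])
  have Key: "V (M x) = (fst (T x), snd x)" for x
  proof (cases x)
    case (Pair x1 x2)
    define v where "v = inv d (c x1)"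
    have dv: "d v = c x1" unfolding v_def by (rule surj_f_inv_f[OF surjd])
    have i1: "inv d (c x1 + d x2) = v + x2"
    proof -
      have "c x1 + d x2 = d (v + x2)" by (simp add: d.add dv)
      then show ?thesis by (simp add: inv_f_f[OF injd])
    qed
    have "as (a x1 - b v) = x1" by (simp add: as.diff aa ab dv)
    then have i2: "inv as x1 = a x1 - b v" by (metis inv_f_f[OF injas])
    show ?thesis using Pair by (simp add: Vf M_def Tx i1 i2 v_def[symmetric] b.add)
  qed
  have MC: "M (scaleK k x) = scaleK k (M x)" for k x
    using TC[of k x] by (simp add: M_def scaleK_def)
  have VM: "\<exists>x. p = M x" for p using MMinv by metis
  have Vadd: "V (p + q) = V p + V q" for p q
  proof -
    obtain x y where "p = M x" "q = M y" using VM by metis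
    then show ?thesis using Key[of "x + y"] Key[of x] Key[of y] by (simp add: M.add[symmetric] T.add)
  qed
  have Vscale: "V (scaleR r p) = scaleR r (V p)" for r p
  proof -
    obtain x where "p = M x" using VM by metis
    then show ?thesis using Key[of "scaleR r x"] Key[of x] by (simp add: M.scale[symmetric] T.scale)
  qed
  have VC: "V (scaleK k p) = scaleK k (V p)" for k p
  proof -
    obtain x where "p = M x" using VM by metis
    then have "V (scaleK k p) = V (M (scaleK k x))" by (simp add: MC)
    also have "\<dots> = (fst (T (scaleK k x)), snd (scaleK k x))" by (rule Key)
    also have "\<dots> = scaleK k (V p)" using \<open>p = M x\<close> Key[of x] TC[of k x] by (simp add: scaleK_def)
    finally show ?thesis .
  qed
  have Vnorm: "norm (V p) = norm p" for p
  proof -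
    obtain x where px: "p = M x" using VM by metis
    have "norm (V p) ^ 2 = norm (fst (T x)) ^ 2 + norm (snd x) ^ 2" using Key[of x] px by (simp add: normsq)
    also have "\<dots> = norm (fst x) ^ 2 + norm (snd (T x)) ^ 2" using Tiso[of x] by simp
    also have "\<dots> = norm p ^ 2" using px by (simp add: normsq M_def)
    finally show ?thesis by (simp add: power2_eq_iff_nonneg)
  qed
  have Vbl: "bounded_linear V"
    by (rule bounded_linear_intro[where K=1]) (simp_all add: Vadd Vscale Vnorm)
  interpret V: bounded_linear V by fact
  define Vs where "Vs = radj V"
  have adjV: "adjK V = Vs" unfolding Vs_def by (rule adjK_radj[OF Vbl VC])
  have Vsbl: "bounded_linear Vs" unfolding Vs_def by (rule radj_bl[OF Vbl])
  interpret Vs: bounded_linear Vs by fact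
  have Vsi: "inner (Vs p) q = inner p (V q)" for p q unfolding Vs_def by (rule radj[OF Vbl])
  have Vip: "inner (V p) (V q) = inner p q" for p q
  proof -
    have "inner (V (p + q)) (V (p + q)) = inner (p + q) (p + q)"
      using Vnorm[of "p + q"] by (simp add: power2_norm_eq_inner[symmetric])
    moreover have "inner (V p) (V p) = inner p p" "inner (V q) (V q) = inner q q"
      using Vnorm[of p] Vnorm[of q] by (simp_all add: power2_norm_eq_inner[symmetric])
    ultimately show ?thesis
      by (simp add: Vadd inner_add_left inner_add_right inner_commute[of q p] inner_commute[of "V q" "V p"])
  qed
  have VsV: "Vs (V p) = p" for p unfolding Vs_def by (rule radj_unique[OF Vbl]) (simp add: Vip)
  have Vsurj: "\<exists>p. V p = w" for w
  proof (cases w)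
    case (Pair y1 x2)
    obtain x1 where "a x1 = y1 - b x2" using surja by (metis surjD)
    then have "V (M (x1, x2)) = w" using Key[of "(x1, x2)"] Pair by (simp add: Tx)
    then show ?thesis by blast
  qed
  have VVs: "V (Vs w) = w" for w using Vsurj[of w] VsV by metis
  define P where "P q = q + T q" for q
  have Pbl: "bounded_linear P" unfolding P_def[abs_def] by (intro bounded_linear_add bounded_linear_ident Tbl)
  have PC: "P (scaleK k p) = scaleK k (P p)" for k p
    using TC[of k p] by (simp add: P_def scaleK_def scaleC_add_right)
  have adjP: "adjK P = radj P" by (rule adjK_radj[OF Pbl PC])
  have PMV: "P x = M x + V (M x)" for x
    using Key[of x] by (simp add: P_def M_def prod_eq_iff)
  have Ms: "radj M w = (fst w, 0) + Ts (0, snd w)" for w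
  proof (rule radj_unique[OF Mbl])
    fix y
    have "inner ((fst w, 0) + Ts (0, snd w)) y = inner (fst w, 0::'h) y + inner (0::'h, snd w) (T y)"
      by (simp add: inner_add_left Tsi)
    also have "\<dots> = inner w (M y)" by (simp add: inner_prod_def M_def)
    finally show "inner ((fst w, 0) + Ts (0, snd w)) y = inner w (M y)" .
  qed
  have Msbl: "bounded_linear (radj M)" by (rule radj_bl[OF Mbl])
  interpret Ms: bounded_linear "radj M" by fact
  have PS: "radj P p = radj M (p + Vs p)" for p
  proof (rule radj_unique[OF Pbl])
    fix y
    have "inner (radj M (p + Vs p)) y = inner (p + Vs p) (M y)" by (rule radj[OF Mbl])
    also have "\<dots> = inner p (P y)" by (simp add: inner_add_left inner_add_right Vsi PMV)
    finally show "inner (radj M (p + Vs p)) y = inner p (P y)" .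
  qed
  define F where "F q = q + Ts (T q)" for q
  have Feq: "F x = scaleR 2 (radj M (M x))" for x
  proof -
    have "T x = Jop (T x) + scaleR 2 (0, snd (T x))" by (simp add: Jop_def prod_eq_iff scaleR_2)
    then have "Ts (T x) = Jop x + scaleR 2 (Ts (0, snd (T x)))"
      by (metis H Ts.add Ts.scale)
    then show ?thesis by (simp add: F_def Ms M_def Jop_def prod_eq_iff scaleR_add_right scaleR_2)
  qed
  have Fbl: "bounded_linear F" unfolding F_def[abs_def]
    by (intro bounded_linear_add bounded_linear_ident bounded_linear_compose[OF Tsbl Tbl])
  interpret F: bounded_linear F by fact
  have nF: "norm z \<le> norm (F z)" for z
  proof -
    have "norm z ^ 2 \<le> inner (F z) z"
      by (simp add: F_def inner_add_left Tsi power2_norm_eq_inner)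
    also have "\<dots> \<le> norm (F z) * norm z" by (metis norm_cauchy_schwarz)
    finally have "norm z * norm z \<le> norm (F z) * norm z" by (simp add: power2_eq_square)
    then show ?thesis by (cases "norm z = 0") (auto simp: mult_le_cancel_right)
  qed
  have injF: "inj F" by (rule inj_from_bound[OF F.linear nF])
  show ?thesis
  proof (rule ext)
    fix p
    define w where "w = scaleR (1/2) (p + Vs p)"
    define u where "u = Minv w"
    have "F u = scaleR 2 (radj M w)" by (simp add: Feq u_def MMinv)
    also have "\<dots> = radj M (p + Vs p)" by (simp add: w_def Ms.scale)
    also have "\<dots> = adjK P p" by (simp add: adjP PS)
    finally have Fu: "inv F (adjK P p) = u" by (metis inv_f_f[OF injF])
    have Pu: "P u = w + V w" using PMV[of u] by (simp add: u_def MMinv)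
    have half: "scaleR (1/2) p + scaleR (1/2) p = p"
      using scaleR_add_left[of "1/2" "1/2" p, symmetric] by simp
    have "w + V w - p = scaleR (1/2) (V p + Vs p)"
      using half
      by (simp add: w_def V.add V.scale VVs algebra_simps scaleR_add_right)
    then have "ReK V p = P (inv F (adjK P p)) - p"
      by (simp add: ReK_def adjV Fu Pu)
    then show "ReK (Vop T) p = ((\<lambda>q. q + T q) \<circ> inv (\<lambda>q. q + adjK T (T q)) \<circ> adjK (\<lambda>q. q + T q)) p - p"
      unfolding V_def P_def[abs_def] F_def[abs_def] adjT by simp
  qed
qed
end
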